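(* Suppose $(A,V,B)$ satisfies Schur-Weyl duality and $e,f\in B$ are idempotents with $Ve\neq0$, $ef=f$ and $fe=e$. Then the following are equivalent: (1) $(A,Ve,eBe)$ satisfies Schur-Weyl duality; (2) every $eBe$-linear endomorphism of $Ve$ extends to a $B$-linear endomorphism of $V$; (3) $(A,Vf,fBf)$ satisfies Schur-Weyl duality; (4) every $fBf$-linear endomorphism of $Vf$ extends to a $B$-linear endomorphism of $V$.
   Context: $k$ is a field, $A,B$ are $k$-algebras, $V$ an $(A,B)$-bimodule. $(A,V,B)$ satisfies Schur-Weyl duality if the image of $A$ in $\operatorname{End}_k(V)$ (via $a\mapsto(v\mapsto av)$) equals $\operatorname{End}_B(V)$ and the image of $B$ (via $b\mapsto(v\mapsto vb)$) equals $\operatorname{End}_A(V)$. For an idempotent $e$, $Ve$ is an $(A,eBe)$-bimodule. *)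

theory Defs
  imports Main "HOL.Vector_Spaces"
begin

definition k_algebra :: "('k::field \<Rightarrow> 'a::ring_1 \<Rightarrow> 'a) \<Rightarrow> bool" where
  "k_algebra s \<longleftrightarrow> vector_space s \<and>
     (\<forall>c x y. s c (x * y) = s c x * y \<and> s c (x * y) = x * s c y)"

text \<open>(A,B)-bimodule V over k: sV is the k-vector space structure of V,
  la the left A-action, ra the right B-action.\<close>
definition bimodule ::
  "('k::field \<Rightarrow> 'a::ring_1 \<Rightarrow> 'a) \<Rightarrow> ('k \<Rightarrow> 'b::ring_1 \<Rightarrow> 'b) \<Rightarrow>
   ('k \<Rightarrow> 'v::ab_group_add \<Rightarrow> 'v) \<Rightarrow> ('a \<Rightarrow> 'v \<Rightarrow> 'v) \<Rightarrow> ('v \<Rightarrow> 'b \<Rightarrow> 'v) \<Rightarrow> bool" where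
  "bimodule sA sB sV la ra \<longleftrightarrow>
     k_algebra sA \<and> k_algebra sB \<and> vector_space sV \<and>
     (\<forall>x y v. la (x * y) v = la x (la y v)) \<and> (\<forall>v. la 1 v = v) \<and>
     (\<forall>x y v. la (x + y) v = la x v + la y v) \<and>
     (\<forall>x v w. la x (v + w) = la x v + la x w) \<and>
     (\<forall>c x v. la (sA c x) v = sV c (la x v)) \<and>
     (\<forall>c x v. la x (sV c v) = sV c (la x v)) \<and>
     (\<forall>x y v. ra v (x * y) = ra (ra v x) y) \<and> (\<forall>v. ra v 1 = v) \<and>
     (\<forall>x y v. ra v (x + y) = ra v x + ra v y) \<and>
     (\<forall>x v w. ra (v + w) x = ra v x + ra w x) \<and>
     (\<forall>c x v. ra v (sB c x) = sV c (ra v x)) \<and>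
     (\<forall>c x v. ra (sV c v) x = sV c (ra v x)) \<and>
     (\<forall>a b v. la a (ra v b) = ra (la a v) b)"

text \<open>k-linear endomorphisms of the subspace W commuting with the action act
  of all elements of S. Maps are functions on the whole type; only their
  values on W matter.\<close>
definition End_on ::
  "('k::field \<Rightarrow> 'v::ab_group_add \<Rightarrow> 'v) \<Rightarrow> 'v set \<Rightarrow> ('s \<Rightarrow> 'v \<Rightarrow> 'v) \<Rightarrow> 's set \<Rightarrow> ('v \<Rightarrow> 'v) set" where
  "End_on sV W act S = {\<phi>. (\<forall>v\<in>W. \<phi> v \<in> W) \<and>
      (\<forall>v\<in>W. \<forall>w\<in>W. \<phi> (v + w) = \<phi> v + \<phi> w) \<and>
      (\<forall>c. \<forall>v\<in>W. \<phi> (sV c v) = sV c (\<phi> v)) \<and>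
      (\<forall>s\<in>S. \<forall>v\<in>W. \<phi> (act s v) = act s (\<phi> v))}"

definition schur_weyl ::
  "('k::field \<Rightarrow> 'v::ab_group_add \<Rightarrow> 'v) \<Rightarrow> ('a \<Rightarrow> 'v \<Rightarrow> 'v) \<Rightarrow> ('v \<Rightarrow> 'b \<Rightarrow> 'v) \<Rightarrow>
   'a set \<Rightarrow> 'v set \<Rightarrow> 'b set \<Rightarrow> bool" where
  "schur_weyl sV la ra AS W BS \<longleftrightarrow>
     (\<forall>\<phi>. \<phi> \<in> End_on sV W (\<lambda>b v. ra v b) BS \<longleftrightarrow> (\<exists>a\<in>AS. \<forall>v\<in>W. \<phi> v = la a v)) \<and>
     (\<forall>\<phi>. \<phi> \<in> End_on sV W la AS \<longleftrightarrow> (\<exists>b\<in>BS. \<forall>v\<in>W. \<phi> v = ra v b))"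

definition right_cut :: "('v \<Rightarrow> 'b \<Rightarrow> 'v) \<Rightarrow> 'b \<Rightarrow> 'v set" where
  "right_cut ra e = {ra v e | v. True}"

definition corner :: "'b::ring_1 \<Rightarrow> 'b set" where
  "corner e = {e * b * e | b. True}"

definition extends_prop ::
  "('k::field \<Rightarrow> 'v::ab_group_add \<Rightarrow> 'v) \<Rightarrow> ('v \<Rightarrow> 'b::ring_1 \<Rightarrow> 'v) \<Rightarrow> 'b \<Rightarrow> bool" where
  "extends_prop sV ra e \<longleftrightarrow>
     (\<forall>\<phi>\<in>End_on sV (right_cut ra e) (\<lambda>b v. ra v b) (corner e).
        \<exists>\<psi>\<in>End_on sV UNIV (\<lambda>b v. ra v b) UNIV. \<forall>v\<in>right_cut ra e. \<psi> v = \<phi> v)"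

end

theory Submission
  imports Defs
begin

locale bm =
  fixes sA :: "'k::field \<Rightarrow> 'a::ring_1 \<Rightarrow> 'a"
    and sB :: "'k \<Rightarrow> 'b::ring_1 \<Rightarrow> 'b"
    and sV :: "'k \<Rightarrow> 'v::ab_group_add \<Rightarrow> 'v"
    and la :: "'a \<Rightarrow> 'v \<Rightarrow> 'v"
    and ra :: "'v \<Rightarrow> 'b \<Rightarrow> 'v"
  assumes bim: "bimodule sA sB sV la ra"
begin

lemma ra_mult: "ra v (x*y) = ra (ra v x) y" using bim unfolding bimodule_def by (elim conjE) simp
lemma ra_addl: "ra (v+w) x = ra v x + ra w x" using bim unfolding bimodule_def by (elim conjE) simp
lemma ra_scal: "ra (sV c v) x = sV c (ra v x)" using bim unfolding bimodule_def by (elim conjE) simp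
lemma la_ra: "la a (ra v b) = ra (la a v) b" using bim unfolding bimodule_def by (elim conjE) simp
lemma la_add: "la x (v+w) = la x v + la x w" using bim unfolding bimodule_def by (elim conjE) simp
lemma la_scal: "la x (sV c v) = sV c (la x v)" using bim unfolding bimodule_def by (elim conjE) simp

lemma rc_closed: "ra v e \<in> right_cut ra e" by (auto simp: right_cut_def)
lemma rc_idem: "e*e=e \<Longrightarrow> u \<in> right_cut ra e \<Longrightarrow> ra u e = u"
  by (auto simp: right_cut_def ra_mult[symmetric])
lemma rc_add: "u \<in> right_cut ra e \<Longrightarrow> w \<in> right_cut ra e \<Longrightarrow> u + w \<in> right_cut ra e"
  by (auto simp: right_cut_def ra_addl[symmetric])
lemma rc_scal: "u \<in> right_cut ra e \<Longrightarrow> sV c u \<in> right_cut ra e"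
  by (auto simp: right_cut_def ra_scal[symmetric])
lemma rc_la: "u \<in> right_cut ra e \<Longrightarrow> la a u \<in> right_cut ra e"
  by (auto simp: right_cut_def la_ra)
lemma rc_corner: "u \<in> right_cut ra e \<Longrightarrow> s \<in> corner e \<Longrightarrow> ra u s \<in> right_cut ra e"
proof -
  assume "u \<in> right_cut ra e" "s \<in> corner e"
  then obtain v b where "u = ra v e" "s = e*b*e" by (auto simp: right_cut_def corner_def)
  hence "ra u s = ra (ra v (e*e*b)) e" by (simp add: ra_mult)
  thus ?thesis by (simp add: rc_closed)
qed

lemma End_on_map: "\<phi> \<in> End_on sV W act S \<Longrightarrow> v \<in> W \<Longrightarrow> \<phi> v \<in> W"
  unfolding End_on_def by blast
lemma End_on_act: "\<phi> \<in> End_on sV W act S \<Longrightarrow> s \<in> S \<Longrightarrow> v \<in> W \<Longrightarrow> \<phi> (act s v) = act s (\<phi> v)"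
  unfolding End_on_def by blast

lemma auto1:
  assumes "\<forall>v\<in>right_cut ra e. \<phi> v = la a v"
  shows "\<phi> \<in> End_on sV (right_cut ra e) (\<lambda>b v. ra v b) (corner e)"
  using assms unfolding End_on_def
  by (auto simp: rc_la rc_add rc_scal rc_corner la_add la_scal la_ra)

lemma auto2:
  assumes "\<forall>v\<in>right_cut ra e. \<phi> v = ra v b" "b \<in> corner e"
  shows "\<phi> \<in> End_on sV (right_cut ra e) la UNIV"
  using assms unfolding End_on_def
  by (auto simp: rc_la rc_add rc_scal rc_corner ra_addl ra_scal la_ra)

lemma auto3:
  assumes sw: "schur_weyl sV la ra UNIV UNIV UNIV" and ee: "e*e = e"
    and phi: "\<phi> \<in> End_on sV (right_cut ra e) la UNIV"
  shows "\<exists>b\<in>corner e. \<forall>v\<in>right_cut ra e. \<phi> v = ra v b"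
proof -
  let ?W = "right_cut ra e"
  define \<psi> where "\<psi> v = \<phi> (ra v e)" for v
  have "\<psi> \<in> End_on sV UNIV la UNIV"
    using phi unfolding End_on_def \<psi>_def
    by (auto simp: rc_closed ra_addl ra_scal la_ra[symmetric])
  then obtain b where b: "\<forall>v. \<psi> v = ra v b"
    using sw[unfolded schur_weyl_def, THEN conjunct2, rule_format, of \<psi>] by blast
  have "\<forall>w\<in>?W. \<phi> w = ra w (e*b*e)"
  proof
    fix w assume w: "w \<in> ?W"
    have 1: "\<phi> w = ra w b" using b rc_idem[OF ee w] unfolding \<psi>_def by metis
    have "\<phi> w \<in> ?W" using phi w unfolding End_on_def by blast
    hence "\<phi> w = ra (\<phi> w) e" using rc_idem[OF ee] by simp
    also have "\<dots> = ra (ra (ra w e) b) e" using 1 rc_idem[OF ee w] by simp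
    finally show "\<phi> w = ra w (e*b*e)" by (simp add: ra_mult)
  qed
  moreover have "e*b*e \<in> corner e" by (auto simp: corner_def)
  ultimately show ?thesis by blast
qed

lemma L1:
  assumes sw: "schur_weyl sV la ra UNIV UNIV UNIV" and ee: "e*e = e"
  shows "schur_weyl sV la ra UNIV (right_cut ra e) (corner e) \<longleftrightarrow> extends_prop sV ra e"
proof
  assume s: "schur_weyl sV la ra UNIV (right_cut ra e) (corner e)"
  show "extends_prop sV ra e" unfolding extends_prop_def
  proof
    fix \<phi> assume "\<phi> \<in> End_on sV (right_cut ra e) (\<lambda>b v. ra v b) (corner e)"
    then obtain a where a: "\<forall>v\<in>right_cut ra e. \<phi> v = la a v"
      using s[unfolded schur_weyl_def, THEN conjunct1, rule_format, of \<phi>] by blast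
    have m: "la a \<in> End_on sV UNIV (\<lambda>b v. ra v b) UNIV"
      unfolding End_on_def by (simp add: la_add la_scal la_ra)
    have "\<forall>v\<in>right_cut ra e. la a v = \<phi> v" using a by simp
    with m show "\<exists>\<psi>\<in>End_on sV UNIV (\<lambda>b v. ra v b) UNIV. \<forall>v\<in>right_cut ra e. \<psi> v = \<phi> v"
      by blast
  qed
next
  assume x: "extends_prop sV ra e"
  have A: "\<exists>a. \<forall>v\<in>right_cut ra e. \<phi> v = la a v"
    if h: "\<phi> \<in> End_on sV (right_cut ra e) (\<lambda>b v. ra v b) (corner e)" for \<phi>
  proof -
    obtain \<psi> where p: "\<psi> \<in> End_on sV UNIV (\<lambda>b v. ra v b) UNIV"
      "\<forall>v\<in>right_cut ra e. \<psi> v = \<phi> v"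
      using bspec[OF x[unfolded extends_prop_def] h] by (elim bexE) blast
    then obtain a where "\<forall>v. \<psi> v = la a v"
      using sw[unfolded schur_weyl_def, THEN conjunct1, rule_format, of \<psi>] by blast
    thus ?thesis using p by metis
  qed
  show "schur_weyl sV la ra UNIV (right_cut ra e) (corner e)"
    unfolding schur_weyl_def
  proof (intro conjI allI iffI)
    fix \<phi> assume "\<phi> \<in> End_on sV (right_cut ra e) (\<lambda>b v. ra v b) (corner e)"
    from A[OF this] show "\<exists>a\<in>UNIV. \<forall>v\<in>right_cut ra e. \<phi> v = la a v" by simp
  next
    fix \<phi> assume "\<exists>a\<in>UNIV. \<forall>v\<in>right_cut ra e. \<phi> v = la a v"
    then obtain a where "\<forall>v\<in>right_cut ra e. \<phi> v = la a v" by blast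
    from auto1[OF this] show "\<phi> \<in> End_on sV (right_cut ra e) (\<lambda>b v. ra v b) (corner e)" .
  next
    fix \<phi> assume "\<phi> \<in> End_on sV (right_cut ra e) la UNIV"
    from auto3[OF sw ee this] show "\<exists>b\<in>corner e. \<forall>v\<in>right_cut ra e. \<phi> v = ra v b" .
  next
    fix \<phi> assume "\<exists>b\<in>corner e. \<forall>v\<in>right_cut ra e. \<phi> v = ra v b"
    then obtain b where "b \<in> corner e" "\<forall>v\<in>right_cut ra e. \<phi> v = ra v b" by blast
    from auto2[OF this(2,1)] show "\<phi> \<in> End_on sV (right_cut ra e) la UNIV" .
  qed
qed

lemma L2:
  assumes ee: "e*e = e" and ff: "f*f = f" and ef: "e*f = f" and fe: "f*e = e"
    and x: "extends_prop sV ra e"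
  shows "extends_prop sV ra f"
  unfolding extends_prop_def
proof
  fix \<phi> assume phi: "\<phi> \<in> End_on sV (right_cut ra f) (\<lambda>b v. ra v b) (corner f)"
  let ?E = "right_cut ra e" and ?F = "right_cut ra f"
  define \<phi>' where "\<phi>' w = ra (\<phi> (ra w f)) e" for w
  have efe: "e*f*e = e" using ee fe by (simp add: mult.assoc)
  have cE: "ra (ra w f) e = w" if "w \<in> ?E" for w
    by (simp add: ra_mult[symmetric] fe rc_idem[OF ee that])
  have cF: "ra (ra u e) f = u" if "u \<in> ?F" for u
    by (simp add: ra_mult[symmetric] ef rc_idem[OF ff that])
  have "\<phi>' \<in> End_on sV ?E (\<lambda>b v. ra v b) (corner e)"
    unfolding End_on_def
  proof (intro CollectI conjI ballI allI)
    fix v assume "v \<in> ?E" thus "\<phi>' v \<in> ?E" by (simp add: \<phi>'_def rc_closed)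
  next
    fix v w assume "v \<in> ?E" "w \<in> ?E"
    thus "\<phi>' (v + w) = \<phi>' v + \<phi>' w"
      using phi unfolding End_on_def \<phi>'_def by (simp add: ra_addl rc_closed)
  next
    fix c v assume "v \<in> ?E"
    thus "\<phi>' (sV c v) = sV c (\<phi>' v)"
      using phi unfolding End_on_def \<phi>'_def by (simp add: ra_scal rc_closed)
  next
    fix s w assume s: "s \<in> corner e" and w: "w \<in> ?E"
    then obtain b where sb: "s = e*b*e" by (auto simp: corner_def)
    let ?y = "f*(e*b*e)*f"
    have y: "?y \<in> corner f" by (auto simp: corner_def)
    have "ra (ra w s) f = ra (ra w f) ?y"
    proof -
      have "ra (ra w f) ?y = ra w (f*(f*(e*b*e)*f))" by (simp add: ra_mult)
      also have "f*(f*(e*b*e)*f) = f*e*b*e*f" using ff by (metis mult.assoc)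
      also have "\<dots> = e*b*e*f" using fe by simp
      also have "ra w \<dots> = ra (ra w s) f" using sb by (simp add: ra_mult[symmetric] mult.assoc)
      finally show ?thesis by simp
    qed
    hence "\<phi> (ra (ra w s) f) = ra (\<phi> (ra w f)) ?y"
      using End_on_act[OF phi y rc_closed, simplified] by simp
    hence "\<phi>' (ra w s) = ra (\<phi> (ra w f)) (?y*e)" by (simp add: \<phi>'_def ra_mult)
    also have "?y*e = e*b*e"
    proof -
      have "?y*e = f*e*b*(e*f*e)" by (simp add: mult.assoc)
      thus ?thesis using efe fe by simp
    qed
    also have "ra (\<phi> (ra w f)) (e*b*e) = ra (\<phi>' w) s"
      using ee sb by (simp add: \<phi>'_def ra_mult[symmetric] mult.assoc[symmetric])
    finally show "\<phi>' (ra w s) = ra (\<phi>' w) s" .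
  qed
  note bspec[OF x[unfolded extends_prop_def] this]
  then obtain \<psi> where p: "\<psi> \<in> End_on sV UNIV (\<lambda>b v. ra v b) UNIV"
      "\<forall>v\<in>?E. \<psi> v = \<phi>' v"
    by (elim bexE) blast
  have "\<forall>u\<in>?F. \<psi> u = \<phi> u"
  proof
    fix u assume u: "u \<in> ?F"
    have "\<psi> u = \<psi> (ra (ra u e) f)" using cF[OF u] by simp
    also have "\<dots> = ra (\<psi> (ra u e)) f" using End_on_act[OF p(1), of f "ra u e", simplified] by simp
    also have "\<dots> = ra (\<phi>' (ra u e)) f" using p(2) rc_closed by simp
    also have "\<dots> = ra (ra (\<phi> u) e) f" using cF[OF u] by (simp add: \<phi>'_def)
    also have "\<dots> = \<phi> u" using cF End_on_map[OF phi u] by simp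
    finally show "\<psi> u = \<phi> u" .
  qed
  thus "\<exists>\<psi>\<in>End_on sV UNIV (\<lambda>b v. ra v b) UNIV. \<forall>v\<in>?F. \<psi> v = \<phi> v" using p(1) by blast
qed

end

theorem mainTheorem8:
  fixes sA :: "'k::field \<Rightarrow> 'a::ring_1 \<Rightarrow> 'a"
    and sB :: "'k \<Rightarrow> 'b::ring_1 \<Rightarrow> 'b"
    and sV :: "'k \<Rightarrow> 'v::ab_group_add \<Rightarrow> 'v"
    and la :: "'a \<Rightarrow> 'v \<Rightarrow> 'v"
    and ra :: "'v \<Rightarrow> 'b \<Rightarrow> 'v"
    and e f :: 'b
  assumes "bimodule sA sB sV la ra"
    and "schur_weyl sV la ra UNIV UNIV UNIV"
    and "e * e = e" and "f * f = f"
    and "right_cut ra e \<noteq> {0}"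
    and "e * f = f" and "f * e = e"
  shows "(schur_weyl sV la ra UNIV (right_cut ra e) (corner e) \<longleftrightarrow> extends_prop sV ra e)
       \<and> (extends_prop sV ra e \<longleftrightarrow> schur_weyl sV la ra UNIV (right_cut ra f) (corner f))
       \<and> (schur_weyl sV la ra UNIV (right_cut ra f) (corner f) \<longleftrightarrow> extends_prop sV ra f)"
proof -
  interpret bm sA sB sV la ra by (rule bm.intro) (rule assms(1))
  have 1: "schur_weyl sV la ra UNIV (right_cut ra e) (corner e) \<longleftrightarrow> extends_prop sV ra e"
    by (rule L1[OF assms(2) assms(3)])
  have 3: "schur_weyl sV la ra UNIV (right_cut ra f) (corner f) \<longleftrightarrow> extends_prop sV ra f"
    by (rule L1[OF assms(2) assms(4)])
  have 2: "extends_prop sV ra e \<longleftrightarrow> extends_prop sV ra f"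
    using L2[OF assms(3,4,6,7)] L2[OF assms(4,3,7,6)] by blast
  show ?thesis using 1 2 3 by blast
qed

end
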